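(* Let $\{P^{[n]}\in\mathbb{R}^{n\times n}\}_{n\in\mathbb{N}}$ be a sequence of (row-)stochastic matrices of increasing dimensions, with the opinion dynamics and wisdom notions described in the context. Then: (i) the sequence is one-time wise if and only if $\lim_{n\to\infty}\|\tfrac{1}{n}P^{[n]}\|_1=0$; (ii) the sequence is finite-time wise if and only if, for every $k\in\mathbb{N}$, $\lim_{n\to\infty}\|\tfrac{1}{n}(P^{[n]})^k\|_1=0$. Moreover, if every $P^{[n]}$ is primitive, then (iii) the sequence is wise if and only if $\lim_{n\to\infty}\|\pi^{[n]}\|_\infty=0$, where $\pi^{[n]}$ is the left dominant eigenvector of $P^{[n]}$ (the unique $\pi^{[n]}\ge 0$ with entries summing to $1$ and $(\pi^{[n]})^\top P^{[n]}=(\pi^{[n]})^\top$).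
   Context: A matrix $P\in\mathbb{R}^{n\times n}$ is stochastic if $P\ge 0$ entrywise and $P\mathbf{1}_n=\mathbf{1}_n$. For nonnegative $P$, $\|P\|_1=\max_{j}\sum_{i=1}^n P_{ij}$ is the maximum column sum. $P$ is primitive if its associated directed graph (edge $(i,j)$ iff $P_{ij}>0$) is strongly connected and aperiodic. For $x\in\mathbb{R}^n$, $\mathrm{ave}(x)=\frac1n\sum_i x_i$. Setting: for each $n$, let $x^{[n]}(0)\in\mathbb{R}^n$ with $x^{[n]}_i(0)=\mu+\xi^{[n]}_i(0)$, where $\mu\in\mathbb{R}$ is a fixed constant and $\xi^{[n]}_1(0),\dots,\xi^{[n]}_n(0)$ are independent Gaussian random variables with mean $0$ and common variance $\sigma^2\in(0,\infty)$; and let $x^{[n]}(k+1)=P^{[n]}x^{[n]}(k)$ for $k\ge 0$. The sequence $\{P^{[n]}\}$ is called: one-time wise if $\lim_{n\to\infty}\mathrm{ave}(x^{[n]}(1))=\mu$; finite-time wise if $\lim_{n\to\infty}\mathrm{ave}(x^{[n]}(k))=\mu$ for all $k\in\mathbb{N}$; wise if $\lim_{n\to\infty}\lim_{k\to\infty}\mathrm{ave}(x^{[n]}(k))=\mu$. All limits in $n$ are in probability. *)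

theory Defs
  imports "HOL-Probability.Probability"
begin

text \<open>n x n real matrices are represented as functions nat => nat => real,
  only the entries with indices below n being relevant; vectors in R^n as nat => real.\<close>

definition stochastic :: "nat \<Rightarrow> (nat \<Rightarrow> nat \<Rightarrow> real) \<Rightarrow> bool" where
  "stochastic n A \<longleftrightarrow> (\<forall>i<n. \<forall>j<n. 0 \<le> A i j) \<and> (\<forall>i<n. (\<Sum>j<n. A i j) = 1)"

definition mat_mult :: "nat \<Rightarrow> (nat \<Rightarrow> nat \<Rightarrow> real) \<Rightarrow> (nat \<Rightarrow> nat \<Rightarrow> real) \<Rightarrow> nat \<Rightarrow> nat \<Rightarrow> real" where
  "mat_mult n A B = (\<lambda>i j. \<Sum>l<n. A i l * B l j)"

fun mat_pow :: "nat \<Rightarrow> (nat \<Rightarrow> nat \<Rightarrow> real) \<Rightarrow> nat \<Rightarrow> nat \<Rightarrow> nat \<Rightarrow> real" where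
  "mat_pow n A 0 = (\<lambda>i j. if i = j then 1 else 0)"
| "mat_pow n A (Suc k) = mat_mult n (mat_pow n A k) A"

definition norm1 :: "nat \<Rightarrow> (nat \<Rightarrow> nat \<Rightarrow> real) \<Rightarrow> real" where
  "norm1 n A = (MAX j\<in>{..<n}. \<Sum>i<n. \<bar>A i j\<bar>)"

definition norm_inf_vec :: "nat \<Rightarrow> (nat \<Rightarrow> real) \<Rightarrow> real" where
  "norm_inf_vec n v = (MAX i\<in>{..<n}. \<bar>v i\<bar>)"

definition ave :: "nat \<Rightarrow> (nat \<Rightarrow> real) \<Rightarrow> real" where
  "ave n x = (\<Sum>i<n. x i) / real n"

fun traj :: "nat \<Rightarrow> (nat \<Rightarrow> nat \<Rightarrow> real) \<Rightarrow> (nat \<Rightarrow> real) \<Rightarrow> nat \<Rightarrow> nat \<Rightarrow> real" where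
  "traj n A x0 0 = x0"
| "traj n A x0 (Suc k) = (\<lambda>i. \<Sum>j<n. A i j * traj n A x0 k j)"

definition graph_edges :: "nat \<Rightarrow> (nat \<Rightarrow> nat \<Rightarrow> real) \<Rightarrow> (nat \<times> nat) set" where
  "graph_edges n A = {(i, j). i < n \<and> j < n \<and> A i j > 0}"

definition strongly_connected :: "nat \<Rightarrow> (nat \<Rightarrow> nat \<Rightarrow> real) \<Rightarrow> bool" where
  "strongly_connected n A \<longleftrightarrow> (\<forall>i<n. \<forall>j<n. (i, j) \<in> (graph_edges n A)\<^sup>*)"

definition aperiodic :: "nat \<Rightarrow> (nat \<Rightarrow> nat \<Rightarrow> real) \<Rightarrow> bool" where
  "aperiodic n A \<longleftrightarrow>
     Gcd {m. m > 0 \<and> (\<exists>i<n. (i, i) \<in> (graph_edges n A) ^^ m)} = (1::nat)"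

definition primitive :: "nat \<Rightarrow> (nat \<Rightarrow> nat \<Rightarrow> real) \<Rightarrow> bool" where
  "primitive n A \<longleftrightarrow> strongly_connected n A \<and> aperiodic n A"

definition left_dom_eigvec :: "nat \<Rightarrow> (nat \<Rightarrow> nat \<Rightarrow> real) \<Rightarrow> nat \<Rightarrow> real" where
  "left_dom_eigvec n A = (THE \<pi>. (\<forall>i<n. 0 \<le> \<pi> i) \<and> (\<Sum>i<n. \<pi> i) = 1
      \<and> (\<forall>j<n. (\<Sum>i<n. \<pi> i * A i j) = \<pi> j) \<and> (\<forall>i\<ge>n. \<pi> i = 0))"

definition conv_in_prob :: "'a measure \<Rightarrow> (nat \<Rightarrow> 'a \<Rightarrow> real) \<Rightarrow> real \<Rightarrow> bool" where
  "conv_in_prob M Y c \<longleftrightarrow>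
     (\<forall>e>0. (\<lambda>n. measure M {\<omega> \<in> space M. \<bar>Y n \<omega> - c\<bar> > e}) \<longlonglongrightarrow> 0)"

definition x0 :: "real \<Rightarrow> (nat \<Rightarrow> nat \<Rightarrow> 'a \<Rightarrow> real) \<Rightarrow> nat \<Rightarrow> 'a \<Rightarrow> nat \<Rightarrow> real" where
  "x0 \<mu> \<xi> n \<omega> = (\<lambda>i. \<mu> + \<xi> n i \<omega>)"

definition one_time_wise :: "'a measure \<Rightarrow> real \<Rightarrow> (nat \<Rightarrow> nat \<Rightarrow> 'a \<Rightarrow> real)
    \<Rightarrow> (nat \<Rightarrow> nat \<Rightarrow> nat \<Rightarrow> real) \<Rightarrow> bool" where
  "one_time_wise M \<mu> \<xi> P \<longleftrightarrow>
     conv_in_prob M (\<lambda>n \<omega>. ave n (traj n (P n) (x0 \<mu> \<xi> n \<omega>) 1)) \<mu>"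

definition finite_time_wise :: "'a measure \<Rightarrow> real \<Rightarrow> (nat \<Rightarrow> nat \<Rightarrow> 'a \<Rightarrow> real)
    \<Rightarrow> (nat \<Rightarrow> nat \<Rightarrow> nat \<Rightarrow> real) \<Rightarrow> bool" where
  "finite_time_wise M \<mu> \<xi> P \<longleftrightarrow>
     (\<forall>k. conv_in_prob M (\<lambda>n \<omega>. ave n (traj n (P n) (x0 \<mu> \<xi> n \<omega>) k)) \<mu>)"

definition wise :: "'a measure \<Rightarrow> real \<Rightarrow> (nat \<Rightarrow> nat \<Rightarrow> 'a \<Rightarrow> real)
    \<Rightarrow> (nat \<Rightarrow> nat \<Rightarrow> nat \<Rightarrow> real) \<Rightarrow> bool" where
  "wise M \<mu> \<xi> P \<longleftrightarrow>
     conv_in_prob M (\<lambda>n \<omega>. lim (\<lambda>k. ave n (traj n (P n) (x0 \<mu> \<xi> n \<omega>) k))) \<mu>"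

end

theory Submission
  imports Defs
begin

lemma numsemi:
  fixes C :: "nat set"
  assumes add: "\<And>a b. a \<in> C \<Longrightarrow> b \<in> C \<Longrightarrow> a + b \<in> C"
    and g: "Gcd C = 1" and z: "0 \<notin> C"
  shows "\<exists>N0. \<forall>N\<ge>N0. N \<in> C"
proof -
  define C0 where "C0 = insert 0 C"
  have add0: "a + b \<in> C0" if "a \<in> C0" "b \<in> C0" for a b
    using that add unfolding C0_def by auto
  have addC: "a + b \<in> C" if "a \<in> C" "b \<in> C0" for a b
    using that add unfolding C0_def by auto
  have mult: "k * c \<in> C0" if "c \<in> C0" for k c
  proof (induction k)
    case 0 then show ?case by (simp add: C0_def)
  next
    case (Suc k)
    have "Suc k * c = c + k * c" by simp
    then show ?case using add0[OF that Suc] by simp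
  qed
  have multC: "k * c \<in> C" if "c \<in> C" "k \<ge> 1" for k c
  proof -
    have "k * c \<in> C0" using mult[of c k] that by (auto simp: C0_def)
    moreover have "c \<noteq> 0" using that(1) z by metis
    then have "k * c \<noteq> 0" using that by simp
    ultimately show ?thesis by (auto simp: C0_def)
  qed
  define G where "G = {int a - int b | a b. a \<in> C0 \<and> b \<in> C0}"
  have Gadd: "x + y \<in> G" if hxy: "x \<in> G" "y \<in> G" for x y
  proof -
    obtain a b where ab: "x = int a - int b" "a \<in> C0" "b \<in> C0" using hxy(1) unfolding G_def by blast
    obtain c d where cd: "y = int c - int d" "c \<in> C0" "d \<in> C0" using hxy(2) unfolding G_def by blast
    have "x + y = int (a + c) - int (b + d)" using ab cd by simp
    then show ?thesis unfolding G_def using ab cd add0 by blast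
  qed
  have Gneg: "- x \<in> G" if hxy: "x \<in> G" for x
  proof -
    obtain a b where ab: "x = int a - int b" "a \<in> C0" "b \<in> C0" using hxy(1) unfolding G_def by blast
    have "- x = int b - int a" using ab by simp
    then show ?thesis unfolding G_def using ab by blast
  qed
  have GC: "int c \<in> G" if "c \<in> C" for c
  proof -
    have "int c = int c - int 0" by simp
    then show ?thesis unfolding G_def C0_def using that by blast
  qed
  have G0: "0 \<in> G" unfolding G_def C0_def by force
  have Cne: "C \<noteq> {}" using g by auto
  then obtain c where c: "c \<in> C" by auto
  have cpos: "c > 0" using c z by (cases c) auto
  define d where "d = (LEAST d::nat. d > 0 \<and> int d \<in> G)"
  have dex: "c > 0 \<and> int c \<in> G" using cpos GC[OF c] by simp
  have d: "d > 0 \<and> int d \<in> G" unfolding d_def by (rule LeastI[of _ c]) (rule dex)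
  have dmin: "d \<le> e" if "e > 0" "int e \<in> G" for e
    unfolding d_def by (rule Least_le) (use that in simp)
  have Gmul: "int (q * d) \<in> G" for q
  proof (induction q)
    case 0 then show ?case using G0 by simp
  next
    case (Suc q)
    have "int (Suc q * d) = int d + int (q * d)" by simp
    then show ?case using Gadd[OF _ Suc] d by simp
  qed
  have ddvd: "d dvd c'" if "c' \<in> C" for c'
  proof -
    have "int (c' mod d) = int c' + - int ((c' div d) * d)"
      by (simp add: of_nat_mod of_nat_div minus_div_mult_eq_mod[symmetric])
    then have mG: "int (c' mod d) \<in> G" using Gadd[OF GC[OF that] Gneg[OF Gmul]] by simp
    have "c' mod d < d" using d by simp
    then have "c' mod d = 0" using dmin[OF _ mG] by (cases "c' mod d = 0") auto
    then show ?thesis by auto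
  qed
  then have "d dvd Gcd C" by (intro Gcd_greatest) auto
  then have d1: "d = 1" using g by simp
  then have "int 1 \<in> G" using d by simp
  then obtain a b where ab: "int 1 = int a - int b" "a \<in> C0" "b \<in> C0" unfolding G_def by blast
  then have a: "a = b + 1" by simp
  show ?thesis
  proof (cases "b = 0")
    case True
    then have "1 \<in> C" using a ab(2) by (auto simp: C0_def)
    then have "\<forall>N\<ge>1. N \<in> C" using multC[of 1] by auto
    then show ?thesis by blast
  next
    case False
    then have bC: "b \<in> C" and b1C: "b + 1 \<in> C" using ab a by (auto simp: C0_def)
    have "N \<in> C" if N: "N \<ge> b * b" for N
    proof -
      define q where "q = N div b"
      define r where "r = N mod b"
      have rb: "r < b" unfolding r_def using False by simp
      have "b * b div b \<le> N div b" using N by (rule div_le_mono)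
      then have qb: "b \<le> q" unfolding q_def using False by simp
      have Neq: "N = (q - r) * b + r * (b + 1)"
      proof -
        have "N = q * b + r" unfolding q_def r_def by simp
        also have "q * b = (q - r) * b + r * b" using qb rb
          by (metis add.commute le_add_diff_inverse2 less_imp_le_nat order.strict_trans2 distrib_right)
        finally show ?thesis by (simp add: algebra_simps)
      qed
      have "(q - r) * b \<in> C" using qb rb by (intro multC bC) auto
      moreover have "r * (b + 1) \<in> C0" using b1C by (intro mult) (auto simp: C0_def)
      ultimately show ?thesis using Neq addC by metis
    qed
    then show ?thesis by blast
  qed
qed



lemma gauss_sum:
  fixes X :: "nat \<Rightarrow> 'a \<Rightarrow> real" and w :: "nat \<Rightarrow> real"
  assumes M: "prob_space M" and sig: "\<sigma> > 0"
    and ind: "prob_space.indep_vars M (\<lambda>_. borel) X {..<n}"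
    and dist: "\<And>i. i < n \<Longrightarrow> distributed M lborel (X i) (normal_density 0 \<sigma>)"
    and w1: "(\<Sum>j<n. w j) = 1"
  shows "distributed M lborel (\<lambda>\<omega>. \<Sum>j<n. w j * X j \<omega>)
           (normal_density 0 (\<sigma> * sqrt (\<Sum>j<n. (w j)\<^sup>2)))"
    and "\<sigma> * sqrt (\<Sum>j<n. (w j)\<^sup>2) > 0"
proof -
  interpret prob_space M by (rule M)
  define J where "J = {j. j < n \<and> w j \<noteq> 0}"
  have finJ: "finite J" unfolding J_def by auto
  have Jne: "J \<noteq> {}"
  proof
    assume "J = {}"
    then have "\<forall>j<n. w j = 0" unfolding J_def by auto
    then have "(\<Sum>j<n. w j) = 0" by simp
    with w1 show False by simp
  qed
  have JS: "J \<subseteq> {..<n}" unfolding J_def by auto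
  have ind2: "indep_vars (\<lambda>_. borel) (\<lambda>j \<omega>. w j * X j \<omega>) J"
    by (rule indep_vars_compose2[where X=X, OF indep_vars_subset[OF ind JS]]) auto
  have d2: "distributed M lborel (\<lambda>\<omega>. w j * X j \<omega>) (normal_density 0 (\<bar>w j\<bar> * \<sigma>))"
    if "j \<in> J" for j
  proof -
    have "distributed M lborel (\<lambda>\<omega>. 0 + w j * X j \<omega>) (normal_density (0 + w j * 0) (\<bar>w j\<bar> * \<sigma>))"
      by (rule normal_density_affine) (use that dist sig in \<open>auto simp: J_def\<close>)
    then show ?thesis by simp
  qed
  have pos: "0 < \<bar>w j\<bar> * \<sigma>" if "j \<in> J" for j using that sig by (auto simp: J_def)
  have S: "distributed M lborel (\<lambda>\<omega>. \<Sum>j\<in>J. w j * X j \<omega>)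
     (normal_density (\<Sum>j\<in>J. 0) (sqrt (\<Sum>j\<in>J. (\<bar>w j\<bar> * \<sigma>)\<^sup>2)))"
    by (rule sum_indep_normal[OF finJ Jne ind2 pos d2])
  have e1: "(\<Sum>j\<in>J. w j * X j \<omega>) = (\<Sum>j<n. w j * X j \<omega>)" for \<omega>
    by (rule sum.mono_neutral_left) (auto simp: J_def)
  have e2: "(\<Sum>j\<in>J. (\<bar>w j\<bar> * \<sigma>)\<^sup>2) = \<sigma>\<^sup>2 * (\<Sum>j<n. (w j)\<^sup>2)"
  proof -
    have "(\<Sum>j\<in>J. (\<bar>w j\<bar> * \<sigma>)\<^sup>2) = (\<Sum>j<n. (\<bar>w j\<bar> * \<sigma>)\<^sup>2)"
      by (rule sum.mono_neutral_left) (auto simp: J_def)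
    also have "\<dots> = \<sigma>\<^sup>2 * (\<Sum>j<n. (w j)\<^sup>2)"
      by (simp add: sum_distrib_left power_mult_distrib mult.commute)
    finally show ?thesis .
  qed
  have e3: "sqrt (\<sigma>\<^sup>2 * (\<Sum>j<n. (w j)\<^sup>2)) = \<sigma> * sqrt (\<Sum>j<n. (w j)\<^sup>2)"
    using sig by (simp add: real_sqrt_mult)
  show "distributed M lborel (\<lambda>\<omega>. \<Sum>j<n. w j * X j \<omega>)
           (normal_density 0 (\<sigma> * sqrt (\<Sum>j<n. (w j)\<^sup>2)))"
    using S by (simp add: e1 e2 e3)
  obtain j where "j \<in> J" using Jne by auto
  then have "0 < (\<Sum>j\<in>J. (\<bar>w j\<bar> * \<sigma>)\<^sup>2)"
    using finJ sig by (intro sum_pos2[of J j]) (auto simp: J_def)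
  then have "0 < \<sigma>\<^sup>2 * (\<Sum>j<n. (w j)\<^sup>2)" by (simp add: e2)
  then have "0 < sqrt (\<sigma>\<^sup>2 * (\<Sum>j<n. (w j)\<^sup>2))" by simp
  then show "\<sigma> * sqrt (\<Sum>j<n. (w j)\<^sup>2) > 0" by (simp add: e3)
qed



lemma tail_upper:
  fixes Z :: "'a \<Rightarrow> real"
  assumes M: "prob_space M" and s: "s > 0" and e: "e > 0"
    and D: "distributed M lborel Z (normal_density 0 s)"
  shows "measure M {\<omega> \<in> space M. \<bar>Z \<omega>\<bar> > e} \<le> s\<^sup>2 / e\<^sup>2"
proof -
  interpret prob_space M by (rule M)
  have Zm[measurable]: "Z \<in> borel_measurable M"
    using distributed_measurable[OF D] by simp
  have ex: "expectation Z = 0" by (rule normal_distributed_expectation[OF s D])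
  have var: "variance Z = s\<^sup>2" by (rule normal_distributed_variance[OF s D])
  have "integrable lborel (\<lambda>x. normal_density 0 s x * (x - 0)^2)"
    by (rule integrable_normal_moment) (use s in auto)
  then have int: "integrable M (\<lambda>x. (Z x)^2)"
    using distributed_integrable[OF D, of "\<lambda>x. x^2"] by simp
  have "prob {x\<in>space M. \<bar>Z x - expectation Z\<bar> \<ge> e} \<le> variance Z / e\<^sup>2"
    by (rule Chebyshev_inequality[OF _ int e]) simp
  then have "prob {x\<in>space M. \<bar>Z x - expectation Z\<bar> \<ge> e} \<le> s\<^sup>2 / e\<^sup>2" unfolding var .
  then have C: "prob {x\<in>space M. \<bar>Z x\<bar> \<ge> e} \<le> s\<^sup>2 / e\<^sup>2" unfolding ex by simp
  have "prob {\<omega> \<in> space M. \<bar>Z \<omega>\<bar> > e} \<le> prob {x\<in>space M. \<bar>Z x\<bar> \<ge> e}"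
    by (rule finite_measure_mono) auto
  with C show ?thesis by simp
qed

definition c0 :: real where
  "c0 = measure (density lborel std_normal_density) {x. 1 < \<bar>x\<bar>}"

lemma c0_pos: "c0 > 0"
proof -
  interpret P: prob_space "density lborel std_normal_density"
    by (rule prob_space_normal_density) simp
  have A: "{x::real. 1 < \<bar>x\<bar>} \<in> sets borel" by measurable
  have "emeasure (density lborel std_normal_density) {x. 1 < \<bar>x\<bar>}
      = (\<integral>\<^sup>+ x. ennreal (std_normal_density x) * indicator {x. 1 < \<bar>x\<bar>} x \<partial>lborel)"
    by (rule emeasure_density) (use A in auto)
  also have "\<dots> \<ge> (\<integral>\<^sup>+ x. ennreal (std_normal_density 2) * indicator {1<..2::real} x \<partial>lborel)"
  proof (rule nn_integral_mono)
    fix x :: real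
    show "ennreal (std_normal_density 2) * indicator {1<..2} x
        \<le> ennreal (std_normal_density x) * indicator {x. 1 < \<bar>x\<bar>} x"
    proof (cases "x \<in> {1<..2}")
      case True
      then have "x\<^sup>2 \<le> 2\<^sup>2" by (intro power_mono) auto
      then have "exp (- 2) \<le> exp (- (x\<^sup>2 / 2))" by simp
      then have "exp (- 2) / sqrt (2 * pi) \<le> exp (- (x\<^sup>2 / 2)) / sqrt (2 * pi)"
        by (rule divide_right_mono) simp
      then have "std_normal_density 2 \<le> std_normal_density x"
        by (simp add: std_normal_density_def)
      with True show ?thesis by (auto simp: indicator_def)
    qed (auto simp: indicator_def)
  qed
  finally have "ennreal (std_normal_density 2) * emeasure lborel {1<..2::real}
      \<le> emeasure (density lborel std_normal_density) {x. 1 < \<bar>x\<bar>}"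
    by (simp add: nn_integral_cmult_indicator)
  then have "ennreal (std_normal_density 2) \<le> ennreal c0"
    unfolding c0_def by (simp add: P.emeasure_eq_measure)
  moreover have "0 < std_normal_density 2" by (rule normal_density_pos) simp
  ultimately show ?thesis
    by (metis ennreal_le_iff less_le_trans measure_nonneg c0_def)
qed

lemma tail_lower:
  fixes Z :: "'a \<Rightarrow> real"
  assumes M: "prob_space M" and s: "s > 0" and e: "e > 0" and es: "e \<le> s"
    and D: "distributed M lborel Z (normal_density 0 s)"
  shows "measure M {\<omega> \<in> space M. \<bar>Z \<omega>\<bar> > e} \<ge> c0"
proof -
  interpret prob_space M by (rule M)
  have Zm[measurable]: "Z \<in> borel_measurable M"
    using distributed_measurable[OF D] by simp
  have DN: "distributed M lborel (\<lambda>x. (Z x - 0) / s) std_normal_density"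
    using normal_standard_normal_convert[OF s] D by simp
  have A: "{x::real. 1 < \<bar>x\<bar>} \<in> sets borel" by measurable
  have "measure M ((\<lambda>x. (Z x - 0) / s) -` {x. 1 < \<bar>x\<bar>} \<inter> space M)
     = measure (distr M lborel (\<lambda>x. (Z x - 0) / s)) {x. 1 < \<bar>x\<bar>}"
    by (rule measure_distr[symmetric]) (use A in auto)
  also have "\<dots> = c0" unfolding c0_def distributed_distr_eq_density[OF DN] ..
  finally have eq: "measure M ((\<lambda>x. (Z x - 0) / s) -` {x. 1 < \<bar>x\<bar>} \<inter> space M) = c0" .
  have sub: "(\<lambda>x. (Z x - 0) / s) -` {x. 1 < \<bar>x\<bar>} \<inter> space M \<subseteq> {\<omega> \<in> space M. \<bar>Z \<omega>\<bar> > e}"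
  proof
    fix x assume "x \<in> (\<lambda>x. (Z x - 0) / s) -` {x. 1 < \<bar>x\<bar>} \<inter> space M"
    then have "1 < \<bar>Z x\<bar> / s" "x \<in> space M" using s by auto
    then have "s < \<bar>Z x\<bar>" using s by (simp add: field_simps)
    with es \<open>x \<in> space M\<close> show "x \<in> {\<omega> \<in> space M. \<bar>Z \<omega>\<bar> > e}" by auto
  qed
  have "measure M ((\<lambda>x. (Z x - 0) / s) -` {x. 1 < \<bar>x\<bar>} \<inter> space M) \<le> measure M {\<omega> \<in> space M. \<bar>Z \<omega>\<bar> > e}"
    by (rule finite_measure_mono[OF sub]) auto
  with eq show ?thesis by simp
qed



lemma max_sq_equiv:
  fixes w :: "nat \<Rightarrow> nat \<Rightarrow> real"
  assumes wnn: "\<And>n j. 1 \<le> n \<Longrightarrow> j < n \<Longrightarrow> 0 \<le> w n j"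
    and w1: "\<And>n. 1 \<le> n \<Longrightarrow> (\<Sum>j<n. w n j) = 1"
  shows "(\<lambda>n. MAX j\<in>{..<n}. w n j) \<longlonglongrightarrow> 0 \<longleftrightarrow> (\<lambda>n. \<Sum>j<n. (w n j)\<^sup>2) \<longlonglongrightarrow> 0"
proof -
  define m where "m n = (MAX j\<in>{..<n}. w n j)" for n
  define q where "q n = (\<Sum>j<n. (w n j)\<^sup>2)" for n
  have b: "0 \<le> m n \<and> (m n)\<^sup>2 \<le> q n \<and> q n \<le> m n" if n: "1 \<le> n" for n
  proof -
    have "0 \<in> {..<n}" using n by simp
    then have ne: "{..<n} \<noteq> {}" by blast
    obtain j0 where j0: "j0 < n" "m n = w n j0"
    proof -
      have "Max ((\<lambda>j. w n j) ` {..<n}) \<in> (\<lambda>j. w n j) ` {..<n}"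
        by (rule Max_in) (use ne in auto)
      then show ?thesis using that unfolding m_def by auto
    qed
    have le: "w n j \<le> m n" if "j < n" for j
      unfolding m_def by (rule Max_ge) (use that in auto)
    have "0 \<le> m n" using j0 wnn[OF n] by simp
    moreover have "(m n)\<^sup>2 \<le> q n"
      unfolding q_def j0(2) by (rule member_le_sum) (use j0 in auto)
    moreover have "q n \<le> (\<Sum>j<n. m n * w n j)"
      unfolding q_def power2_eq_square
      by (rule sum_mono) (use le wnn[OF n] in \<open>auto intro: mult_right_mono\<close>)
    then have "q n \<le> m n" by (simp add: sum_distrib_left[symmetric] w1[OF n])
    ultimately show ?thesis by simp
  qed
  have ev: "eventually (\<lambda>n. 1 \<le> n) sequentially" by (rule eventually_ge_at_top)
  have q0: "0 \<le> q n" for n unfolding q_def by (simp add: sum_nonneg)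
  show ?thesis
    unfolding m_def[symmetric] q_def[symmetric]
  proof
    assume "m \<longlonglongrightarrow> 0"
    show "q \<longlonglongrightarrow> 0"
      by (rule tendsto_sandwich[OF _ _ tendsto_const \<open>m \<longlonglongrightarrow> 0\<close>])
         (use q0 b in \<open>auto intro: eventually_mono[OF ev]\<close>)
  next
    assume "q \<longlonglongrightarrow> 0"
    then have "(\<lambda>n. sqrt (q n)) \<longlonglongrightarrow> sqrt 0" by (intro tendsto_intros)
    then have sq: "(\<lambda>n. sqrt (q n)) \<longlonglongrightarrow> 0" by simp
    have "m n \<le> sqrt (q n)" if "1 \<le> n" for n
      using b[OF that] real_le_rsqrt by blast
    then show "m \<longlonglongrightarrow> 0"
      by (intro tendsto_sandwich[OF _ _ tendsto_const sq])
         (use b in \<open>auto intro: eventually_mono[OF ev]\<close>)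
  qed
qed

lemma core_prob:
  fixes \<xi> :: "nat \<Rightarrow> nat \<Rightarrow> 'a \<Rightarrow> real" and w :: "nat \<Rightarrow> nat \<Rightarrow> real"
  assumes M: "prob_space M" and sig: "\<sigma> > 0"
    and ind: "\<And>n. prob_space.indep_vars M (\<lambda>_. borel) (\<xi> n) {..<n}"
    and dist: "\<And>n i. i < n \<Longrightarrow> distributed M lborel (\<xi> n i) (normal_density 0 \<sigma>)"
    and wnn: "\<And>n j. 1 \<le> n \<Longrightarrow> j < n \<Longrightarrow> 0 \<le> w n j"
    and w1: "\<And>n. 1 \<le> n \<Longrightarrow> (\<Sum>j<n. w n j) = 1"
    and Y: "\<And>n \<omega>. 1 \<le> n \<Longrightarrow> \<omega> \<in> space M \<Longrightarrow> Y n \<omega> = \<mu> + (\<Sum>j<n. w n j * \<xi> n j \<omega>)"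
  shows "conv_in_prob M Y \<mu> \<longleftrightarrow> (\<lambda>n. MAX j\<in>{..<n}. w n j) \<longlonglongrightarrow> 0"
proof -
  define q where "q n = (\<Sum>j<n. (w n j)\<^sup>2)" for n
  define s where "s n = \<sigma> * sqrt (q n)" for n
  define Z where "Z n \<omega> = (\<Sum>j<n. w n j * \<xi> n j \<omega>)" for n \<omega>
  have DZ: "distributed M lborel (Z n) (normal_density 0 (s n))" and spos: "s n > 0"
    if "1 \<le> n" for n
    using gauss_sum[OF M sig ind dist w1[OF that]] unfolding Z_def s_def q_def by auto
  have seteq: "{\<omega> \<in> space M. \<bar>Y n \<omega> - \<mu>\<bar> > e} = {\<omega> \<in> space M. \<bar>Z n \<omega>\<bar> > e}"
    if "1 \<le> n" for n e using Y[OF that] unfolding Z_def by auto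
  have ev: "eventually (\<lambda>n. 1 \<le> n) sequentially" by (rule eventually_ge_at_top)
  have q0: "0 \<le> q n" for n unfolding q_def by (simp add: sum_nonneg)
  have "conv_in_prob M Y \<mu> \<longleftrightarrow> q \<longlonglongrightarrow> 0"
  proof
    assume q: "q \<longlonglongrightarrow> 0"
    show "conv_in_prob M Y \<mu>" unfolding conv_in_prob_def
    proof (intro allI impI)
      fix e :: real assume e: "e > 0"
      have lim: "(\<lambda>n. \<sigma>\<^sup>2 * q n / e\<^sup>2) \<longlonglongrightarrow> \<sigma>\<^sup>2 * 0 / e\<^sup>2"
        by (intro tendsto_intros q) (use e in simp)
      then have lim: "(\<lambda>n. \<sigma>\<^sup>2 * q n / e\<^sup>2) \<longlonglongrightarrow> 0" by simp
      have "measure M {\<omega> \<in> space M. \<bar>Y n \<omega> - \<mu>\<bar> > e} \<le> \<sigma>\<^sup>2 * q n / e\<^sup>2" if "1 \<le> n" for n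
      proof -
        have "measure M {\<omega> \<in> space M. \<bar>Z n \<omega>\<bar> > e} \<le> (s n)\<^sup>2 / e\<^sup>2"
          by (rule tail_upper[OF M spos[OF that] e DZ[OF that]])
        also have "(s n)\<^sup>2 = \<sigma>\<^sup>2 * q n" unfolding s_def using q0[of n]
          by (simp add: power_mult_distrib)
        finally show ?thesis using seteq[OF that] by simp
      qed
      then show "(\<lambda>n. measure M {\<omega> \<in> space M. \<bar>Y n \<omega> - \<mu>\<bar> > e}) \<longlonglongrightarrow> 0"
        using lim by (intro tendsto_sandwich[OF _ _ tendsto_const lim])
          (auto intro: eventually_mono[OF ev])
    qed
  next
    assume c: "conv_in_prob M Y \<mu>"
    show "q \<longlonglongrightarrow> 0"
    proof (rule order_tendstoI)
      fix a :: real assume "a < 0"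
      then show "eventually (\<lambda>n. a < q n) sequentially" using q0
        by (auto intro: always_eventually less_le_trans)
    next
      fix \<delta> :: real assume d: "0 < \<delta>"
      define e where "e = \<sigma> * sqrt \<delta>"
      have e: "e > 0" using d sig unfolding e_def by simp
      have "(\<lambda>n. measure M {\<omega> \<in> space M. \<bar>Y n \<omega> - \<mu>\<bar> > e}) \<longlonglongrightarrow> 0"
        using c e unfolding conv_in_prob_def by auto
      then have "eventually (\<lambda>n. measure M {\<omega> \<in> space M. \<bar>Y n \<omega> - \<mu>\<bar> > e} < c0) sequentially"
        using c0_pos by (rule order_tendstoD(2))
      then show "eventually (\<lambda>n. q n < \<delta>) sequentially"
      proof (rule eventually_elim2[OF _ ev])
        fix n assume lt: "measure M {\<omega> \<in> space M. \<bar>Y n \<omega> - \<mu>\<bar> > e} < c0" and n: "1 \<le> n"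
        show "q n < \<delta>"
        proof (rule ccontr)
          assume "\<not> q n < \<delta>"
          then have "sqrt \<delta> \<le> sqrt (q n)" by simp
          then have "e \<le> s n" unfolding e_def s_def using sig by simp
          then have "c0 \<le> measure M {\<omega> \<in> space M. \<bar>Z n \<omega>\<bar> > e}"
            by (rule tail_lower[OF M spos[OF n] e _ DZ[OF n]])
          with lt seteq[OF n] show False by simp
        qed
      qed
    qed
  qed
  also have "\<dots> \<longleftrightarrow> (\<lambda>n. MAX j\<in>{..<n}. w n j) \<longlonglongrightarrow> 0"
    unfolding q_def by (rule max_sq_equiv[OF wnn w1, symmetric])
  finally show ?thesis .
qed



lemma mp_nonneg:
  assumes "stochastic n A" "j < n"
  shows "0 \<le> mat_pow n A k i j"
  using assms(2)
proof (induction k arbitrary: i j)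
  case 0 then show ?case by simp
next
  case (Suc k)
  show ?case using Suc assms(1) unfolding stochastic_def
    by (auto simp: mat_mult_def intro!: sum_nonneg mult_nonneg_nonneg)
qed

lemma mp_rowsum:
  assumes "stochastic n A" "i < n"
  shows "(\<Sum>j<n. mat_pow n A k i j) = 1"
proof (induction k)
  case 0 then show ?case using assms(2) by (simp add: sum.delta)
next
  case (Suc k)
  have "(\<Sum>j<n. mat_pow n A (Suc k) i j) = (\<Sum>j<n. \<Sum>l<n. mat_pow n A k i l * A l j)"
    by (simp add: mat_mult_def)
  also have "\<dots> = (\<Sum>l<n. mat_pow n A k i l * (\<Sum>j<n. A l j))"
    by (subst sum.swap) (simp add: sum_distrib_left)
  also have "\<dots> = (\<Sum>l<n. mat_pow n A k i l)"
    using assms(1) unfolding stochastic_def by simp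
  finally show ?case using Suc by simp
qed

lemma traj_add: "traj n A x (k + m) = traj n A (traj n A x k) m"
  by (induction m) auto

lemma traj_shift: "traj n A x (Suc k) = traj n A (\<lambda>i. \<Sum>j<n. A i j * x j) k"
  by (induction k) auto

lemma traj_mp: "i < n \<Longrightarrow> traj n A x k i = (\<Sum>j<n. mat_pow n A k i j * x j)"
proof (induction k arbitrary: x i)
  case 0
  have "(\<Sum>j<n. (if i = j then 1 else 0) * x j) = (\<Sum>j<n. if i = j then x j else 0)"
    by (rule sum.cong) auto
  then show ?case using 0 by simp
next
  case (Suc k)
  have "traj n A x (Suc k) i = (\<Sum>j<n. mat_pow n A k i j * (\<Sum>l<n. A j l * x l))"
    unfolding traj_shift by (rule Suc.IH[OF Suc.prems])
  also have "\<dots> = (\<Sum>l<n. (\<Sum>j<n. mat_pow n A k i j * A j l) * x l)"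
    by (simp add: sum_distrib_left sum_distrib_right mult.assoc) (rule sum.swap)
  also have "\<dots> = (\<Sum>l<n. mat_pow n A (Suc k) i l * x l)"
    by (simp add: mat_mult_def)
  finally show ?case .
qed

lemma ave_formula:
  assumes "stochastic n A" "n \<ge> 1"
  shows "ave n (traj n A (\<lambda>i. \<mu> + z i) k)
       = \<mu> + (\<Sum>j<n. ((\<Sum>i<n. mat_pow n A k i j) / real n) * z j)"
proof -
  have "(\<Sum>i<n. traj n A (\<lambda>i. \<mu> + z i) k i)
      = (\<Sum>i<n. \<Sum>j<n. mat_pow n A k i j * (\<mu> + z j))"
    by (rule sum.cong) (simp_all add: traj_mp)
  also have "\<dots> = (\<Sum>i<n. \<mu> * (\<Sum>j<n. mat_pow n A k i j) + (\<Sum>j<n. mat_pow n A k i j * z j))"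
    by (rule sum.cong[OF refl]) (simp add: sum_distrib_left sum.distrib[symmetric] algebra_simps)
  also have "\<dots> = (\<Sum>i<n. \<mu> + (\<Sum>j<n. mat_pow n A k i j * z j))"
    by (rule sum.cong) (simp_all add: mp_rowsum[OF assms(1)])
  also have "\<dots> = real n * \<mu> + (\<Sum>j<n. (\<Sum>i<n. mat_pow n A k i j) * z j)"
    by (simp add: sum.distrib sum_distrib_right) (rule sum.swap)
  finally have "(\<Sum>i<n. traj n A (\<lambda>i. \<mu> + z i) k i) = real n * \<mu> + (\<Sum>j<n. (\<Sum>i<n. mat_pow n A k i j) * z j)" .
  then show ?thesis using assms(2) unfolding ave_def
    by (simp add: add_divide_distrib sum_divide_distrib[symmetric])
qed

lemma ft_k:
  fixes M :: "'a measure" and \<xi> :: "nat \<Rightarrow> nat \<Rightarrow> 'a \<Rightarrow> real"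
    and \<mu> \<sigma> :: real and P :: "nat \<Rightarrow> nat \<Rightarrow> nat \<Rightarrow> real"
  assumes M: "prob_space M"
    and sig: "\<sigma> > 0"
    and ind: "\<And>n. prob_space.indep_vars M (\<lambda>_. borel) (\<xi> n) {..<n}"
    and dist: "\<And>n i. i < n \<Longrightarrow> distributed M lborel (\<xi> n i) (normal_density 0 \<sigma>)"
    and st: "\<And>n. stochastic n (P n)"
  shows "conv_in_prob M (\<lambda>n \<omega>. ave n (traj n (P n) (x0 \<mu> \<xi> n \<omega>) k)) \<mu>
     \<longleftrightarrow> (\<lambda>n. norm1 n (\<lambda>i j. mat_pow n (P n) k i j / real n)) \<longlonglongrightarrow> 0"
proof -
  define w where "w n j = (\<Sum>i<n. mat_pow n (P n) k i j) / real n" for n j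
  have wnn: "0 \<le> w n j" if "j < n" for n j
    unfolding w_def using mp_nonneg[OF st that] by (simp add: sum_nonneg)
  have w1: "(\<Sum>j<n. w n j) = 1" if "1 \<le> n" for n
  proof -
    have "(\<Sum>j<n. w n j) = (\<Sum>j<n. \<Sum>i<n. mat_pow n (P n) k i j) / real n"
      unfolding w_def by (simp add: sum_divide_distrib)
    also have "\<dots> = (\<Sum>i<n. \<Sum>j<n. mat_pow n (P n) k i j) / real n"
      by (subst sum.swap) simp
    also have "\<dots> = 1" using that by (simp add: mp_rowsum[OF st])
    finally show ?thesis .
  qed
  have Y: "ave n (traj n (P n) (x0 \<mu> \<xi> n \<omega>) k) = \<mu> + (\<Sum>j<n. w n j * \<xi> n j \<omega>)"
    if "1 \<le> n" for n \<omega>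
    unfolding x0_def w_def by (rule ave_formula[OF st that])
  have "conv_in_prob M (\<lambda>n \<omega>. ave n (traj n (P n) (x0 \<mu> \<xi> n \<omega>) k)) \<mu>
      \<longleftrightarrow> (\<lambda>n. MAX j\<in>{..<n}. w n j) \<longlonglongrightarrow> 0"
    by (rule core_prob[OF M sig ind dist wnn w1 Y])
  also have "(\<lambda>n. MAX j\<in>{..<n}. w n j) = (\<lambda>n. norm1 n (\<lambda>i j. mat_pow n (P n) k i j / real n))"
  proof
    fix n
    show "(MAX j\<in>{..<n}. w n j) = norm1 n (\<lambda>i j. mat_pow n (P n) k i j / real n)"
      unfolding norm1_def
    proof (rule arg_cong[where f=Max], rule image_cong[OF refl])
      fix j assume "j \<in> {..<n}"
      then have jn: "j < n" by simp
      have "\<bar>mat_pow n (P n) k i j / real n\<bar> = mat_pow n (P n) k i j / real n" for i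
        using mp_nonneg[OF st jn] by (simp add: abs_of_nonneg)
      then show "w n j = (\<Sum>i<n. \<bar>mat_pow n (P n) k i j / real n\<bar>)"
        unfolding w_def by (simp only: sum_divide_distrib)
    qed
  qed
  finally show ?thesis .
qed



lemma walk_pos:
  assumes st: "stochastic n A"
  shows "(i, j) \<in> (graph_edges n A) ^^ k \<Longrightarrow> 0 < mat_pow n A k i j"
proof (induction k arbitrary: j)
  case 0 then show ?case by simp
next
  case (Suc k)
  then obtain l where il: "(i, l) \<in> (graph_edges n A) ^^ k" and lj: "(l, j) \<in> graph_edges n A"
    by auto
  from lj have l: "l < n" "j < n" "A l j > 0" unfolding graph_edges_def by auto
  have "0 < mat_pow n A k i l * A l j" using Suc.IH[OF il] l by simp
  also have "\<dots> \<le> (\<Sum>l'<n. mat_pow n A k i l' * A l' j)"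
    by (rule member_le_sum[where f="\<lambda>l'. mat_pow n A k i l' * A l' j"])
       (use l st mp_nonneg[OF st] in \<open>auto simp: stochastic_def\<close>)
  finally show ?case by (simp add: mat_mult_def)
qed

lemma prim_pos:
  assumes st: "stochastic n A" and n: "n \<ge> 1" and pr: "primitive n A"
  shows "\<exists>m\<ge>1. \<forall>i<n. \<forall>j<n. 0 < mat_pow n A m i j"
proof -
  define R where "R = graph_edges n A"
  define C where "C = {m. m > 0 \<and> (0, 0) \<in> R ^^ m}"
  define S where "S = {m. m > 0 \<and> (\<exists>i<n. (i, i) \<in> R ^^ m)}"
  have sc: "\<And>i j. i < n \<Longrightarrow> j < n \<Longrightarrow> \<exists>k. (i, j) \<in> R ^^ k"
    using pr unfolding primitive_def strongly_connected_def R_def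
    by (auto simp: rtrancl_power)
  have GS: "Gcd S = 1" using pr unfolding primitive_def aperiodic_def S_def R_def by simp
  have comp: "(a, c) \<in> R ^^ (k + l)" if "(a, b) \<in> R ^^ k" "(b, c) \<in> R ^^ l" for a b c k l
    using that by (auto simp: relpow_add)
  have Cadd: "a + b \<in> C" if "a \<in> C" "b \<in> C" for a b
    using that comp unfolding C_def by auto
  have C0: "0 \<notin> C" unfolding C_def by simp
  have "Gcd C dvd s" if s: "s \<in> S" for s
  proof -
    obtain i where i: "i < n" "(i, i) \<in> R ^^ s" "s > 0" using s unfolding S_def by auto
    obtain a where a: "(0, i) \<in> R ^^ a" using sc[OF _ i(1)] n by auto
    obtain b where b: "(i, 0) \<in> R ^^ b" using sc[OF i(1)] n by auto
    show ?thesis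
    proof (cases "a + b = 0")
      case True
      then have "a = 0" "b = 0" by auto
      then have "i = 0" using a by simp
      then have "s \<in> C" using i unfolding C_def by simp
      then show ?thesis by (rule Gcd_dvd)
    next
      case False
      have "(0, 0) \<in> R ^^ (a + b)" by (rule comp[OF a b])
      then have ab: "a + b \<in> C" using False unfolding C_def by simp
      have "(0, 0) \<in> R ^^ ((a + s) + b)" by (rule comp[OF comp[OF a i(2)] b])
      then have asb: "a + s + b \<in> C" using i unfolding C_def by simp
      have "Gcd C dvd (a + s + b) - (a + b)"
        by (rule dvd_diff_nat) (use ab asb in \<open>auto intro: Gcd_dvd\<close>)
      then show ?thesis by simp
    qed
  qed
  then have "Gcd C dvd Gcd S" by (intro Gcd_greatest) auto
  then have GC: "Gcd C = 1" using GS by simp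
  obtain N0 where N0: "\<And>N. N \<ge> N0 \<Longrightarrow> N \<in> C" using numsemi[OF Cadd GC C0] by blast
  define fa where "fa i = (SOME a. (i, 0) \<in> R ^^ a)" for i
  define fb where "fb i = (SOME b. (0, i) \<in> R ^^ b)" for i
  have fa: "(i, 0) \<in> R ^^ fa i" if "i < n" for i
    unfolding fa_def by (rule someI_ex) (use sc[OF that] n in auto)
  have fb: "(0, i) \<in> R ^^ fb i" if "i < n" for i
    unfolding fb_def by (rule someI_ex) (use sc[OF _ that] n in auto)
  define K where "K = N0 + 1 + (\<Sum>i<n. fa i) + (\<Sum>i<n. fb i)"
  have "0 < mat_pow n A K i j" if ij: "i < n" "j < n" for i j
  proof -
    have "fa i \<le> (\<Sum>i<n. fa i)" by (rule member_le_sum) (use ij in auto)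
    moreover have "fb j \<le> (\<Sum>i<n. fb i)" by (rule member_le_sum) (use ij in auto)
    ultimately have le: "fa i + fb j \<le> K - N0 - 1" unfolding K_def by simp
    define L where "L = K - fa i - fb j"
    have "L \<ge> N0" using le unfolding L_def K_def by simp
    then have "L \<in> C" by (rule N0)
    then have "(0, 0) \<in> R ^^ L" unfolding C_def by simp
    then have "(i, j) \<in> R ^^ ((fa i + L) + fb j)" by (rule comp[OF comp[OF fa[OF ij(1)]] fb[OF ij(2)]])
    moreover have "(fa i + L) + fb j = K" using le unfolding L_def K_def by simp
    ultimately show ?thesis using walk_pos[OF st] unfolding R_def by simp
  qed
  moreover have "K \<ge> 1" unfolding K_def by simp
  ultimately show ?thesis by blast
qed



lemma mp_stoch: "stochastic n A \<Longrightarrow> stochastic n (mat_pow n A m)"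
  unfolding stochastic_def using mp_nonneg mp_rowsum by (metis stochastic_def)

lemma avg_le:
  assumes st: "stochastic n B" and i: "i < n" and v: "\<And>j. j < n \<Longrightarrow> v j \<le> c"
  shows "(\<Sum>j<n. B i j * v j) \<le> c"
proof -
  have "(\<Sum>j<n. B i j * v j) \<le> (\<Sum>j<n. B i j * c)"
    by (rule sum_mono) (use st i v in \<open>auto simp: stochastic_def intro: mult_left_mono\<close>)
  also have "\<dots> = c" using st i by (simp add: sum_distrib_right[symmetric] stochastic_def)
  finally show ?thesis .
qed

lemma avg_ge:
  assumes st: "stochastic n B" and i: "i < n" and v: "\<And>j. j < n \<Longrightarrow> c \<le> v j"
  shows "c \<le> (\<Sum>j<n. B i j * v j)"
proof -
  have "c = (\<Sum>j<n. B i j * c)" using st i by (simp add: sum_distrib_right[symmetric] stochastic_def)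
  also have "\<dots> \<le> (\<Sum>j<n. B i j * v j)"
    by (rule sum_mono) (use st i v in \<open>auto simp: stochastic_def intro: mult_left_mono\<close>)
  finally show ?thesis .
qed

lemma contr_up:
  assumes st: "stochastic n B" and i: "i < n" and d: "\<And>j. j < n \<Longrightarrow> \<delta> \<le> B i j"
    and v: "\<And>j. j < n \<Longrightarrow> lo \<le> v j \<and> v j \<le> hi" and jm: "jm < n" "v jm = lo"
  shows "(\<Sum>j<n. B i j * v j) \<le> hi - \<delta> * (hi - lo)"
proof -
  have "(\<Sum>j<n. B i j * v j) = (\<Sum>j<n. B i j * hi) - (\<Sum>j<n. B i j * (hi - v j))"
    by (simp add: sum_subtractf[symmetric] algebra_simps)
  also have "(\<Sum>j<n. B i j * hi) = hi" using st i by (simp add: sum_distrib_right[symmetric] stochastic_def)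
  also have "B i jm * (hi - v jm) \<le> (\<Sum>j<n. B i j * (hi - v j))"
    by (rule member_le_sum[where f="\<lambda>j. B i j * (hi - v j)"]) (use st i v jm in \<open>auto simp: stochastic_def\<close>)
  moreover have "\<delta> * (hi - lo) \<le> B i jm * (hi - v jm)"
    using d[OF jm(1)] v[OF jm(1)] jm by (auto intro: mult_right_mono)
  ultimately show ?thesis by simp
qed

lemma contr_lo:
  assumes st: "stochastic n B" and i: "i < n" and d: "\<And>j. j < n \<Longrightarrow> \<delta> \<le> B i j"
    and v: "\<And>j. j < n \<Longrightarrow> lo \<le> v j \<and> v j \<le> hi" and jm: "jm < n" "v jm = hi"
  shows "lo + \<delta> * (hi - lo) \<le> (\<Sum>j<n. B i j * v j)"
proof -
  have "(\<Sum>j<n. B i j * v j) = (\<Sum>j<n. B i j * lo) + (\<Sum>j<n. B i j * (v j - lo))"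
    by (simp add: sum.distrib[symmetric] algebra_simps)
  also have "(\<Sum>j<n. B i j * lo) = lo" using st i by (simp add: sum_distrib_right[symmetric] stochastic_def)
  also have "B i jm * (v jm - lo) \<le> (\<Sum>j<n. B i j * (v j - lo))"
    by (rule member_le_sum[where f="\<lambda>j. B i j * (v j - lo)"]) (use st i v jm in \<open>auto simp: stochastic_def\<close>)
  moreover have "\<delta> * (hi - lo) \<le> B i jm * (v jm - lo)"
    using d[OF jm(1)] v[OF jm(1)] jm by (auto intro: mult_right_mono)
  ultimately show ?thesis by simp
qed



lemma erg_conv:
  assumes st: "stochastic n A" and n: "n \<ge> 1" and m: "m \<ge> 1"
    and pos: "\<And>i j. i < n \<Longrightarrow> j < n \<Longrightarrow> 0 < mat_pow n A m i j"
  shows "\<exists>L. \<forall>i<n. (\<lambda>k. traj n A x k i) \<longlonglongrightarrow> L"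
proof -
  define y where "y k = traj n A x k" for k
  define hi where "hi k = Max (y k ` {..<n})" for k
  define lo where "lo k = Min (y k ` {..<n})" for k
  define osc where "osc k = hi k - lo k" for k
  have "0 \<in> {..<n}" using n by simp
  then have ne: "{..<n} \<noteq> {}" by blast
  have bnd: "lo k \<le> y k i \<and> y k i \<le> hi k" if "i < n" for k i
    unfolding hi_def lo_def using that by auto
  have hin: "\<exists>j<n. y k j = hi k" for k
  proof -
    have "hi k \<in> y k ` {..<n}" unfolding hi_def by (rule Max_in) (use ne in auto)
    then show ?thesis by auto
  qed
  have lon: "\<exists>j<n. y k j = lo k" for k
  proof -
    have "lo k \<in> y k ` {..<n}" unfolding lo_def by (rule Min_in) (use ne in auto)
    then show ?thesis by auto
  qed
  have oscnn: "0 \<le> osc k" for k using bnd[of 0 k] n unfolding osc_def by auto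
  have ysuc: "y (Suc k) i = (\<Sum>j<n. A i j * y k j)" for k i unfolding y_def by simp
  have hidec: "hi (Suc k) \<le> hi k" for k
  proof -
    have "y (Suc k) i \<le> hi k" if "i < n" for i
      unfolding ysuc by (rule avg_le[OF st that]) (use bnd in auto)
    then show ?thesis unfolding hi_def[of "Suc k"] using ne by auto
  qed
  have loinc: "lo k \<le> lo (Suc k)" for k
  proof -
    have "lo k \<le> y (Suc k) i" if "i < n" for i
      unfolding ysuc by (rule avg_ge[OF st that]) (use bnd in auto)
    then show ?thesis unfolding lo_def[of "Suc k"] using ne by auto
  qed
  have decseq: "decseq hi" by (rule decseq_SucI) (rule hidec)
  have incseq: "incseq lo" by (rule incseq_SucI) (rule loinc)
  define Q where "Q = mat_pow n A m"
  have stQ: "stochastic n Q" unfolding Q_def by (rule mp_stoch[OF st])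
  define \<delta>0 where "\<delta>0 = Min ((\<lambda>(i, j). Q i j) ` ({..<n} \<times> {..<n}))"
  have d0: "\<delta>0 \<le> Q i j" if "i < n" "j < n" for i j
    unfolding \<delta>0_def by (rule Min_le) (use that in auto)
  have d0pos: "\<delta>0 > 0"
  proof -
    have "\<delta>0 \<in> (\<lambda>(i, j). Q i j) ` ({..<n} \<times> {..<n})"
      unfolding \<delta>0_def by (rule Min_in) (use ne in auto)
    then show ?thesis using pos unfolding Q_def by auto
  qed
  define \<delta> where "\<delta> = min \<delta>0 (1/2)"
  have dpos: "\<delta> > 0" and dhalf: "\<delta> \<le> 1/2" unfolding \<delta>_def using d0pos by auto
  have d: "\<delta> \<le> Q i j" if "i < n" "j < n" for i j using d0[OF that] unfolding \<delta>_def by simp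
  define r where "r = 1 - 2 * \<delta>"
  have r: "0 \<le> r" "r < 1" unfolding r_def using dpos dhalf by auto
  have ykm: "y (k + m) i = (\<Sum>j<n. Q i j * y k j)" if "i < n" for k i
    unfolding y_def traj_add Q_def by (rule traj_mp[OF that])
  have contr: "osc (k + m) \<le> r * osc k" for k
  proof -
    obtain j0 where j0: "j0 < n" "y k j0 = lo k" using lon by auto
    obtain j1 where j1: "j1 < n" "y k j1 = hi k" using hin by auto
    have "y (k + m) i \<le> hi k - \<delta> * (hi k - lo k)" if "i < n" for i
      unfolding ykm[OF that] by (rule contr_up[where v="y k" and lo="lo k" and hi="hi k" and jm = j0 and \<delta> = \<delta>]) (use stQ that d bnd j0 in auto)
    then have H: "hi (k + m) \<le> hi k - \<delta> * (hi k - lo k)"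
      unfolding hi_def[of "k + m"] using ne by auto
    have "lo k + \<delta> * (hi k - lo k) \<le> y (k + m) i" if "i < n" for i
      unfolding ykm[OF that] by (rule contr_lo[where v="y k" and lo="lo k" and hi="hi k" and jm = j1 and \<delta> = \<delta>]) (use stQ that d bnd j1 in auto)
    then have Lo: "lo k + \<delta> * (hi k - lo k) \<le> lo (k + m)"
      unfolding lo_def[of "k + m"] using ne by auto
    show ?thesis using H Lo unfolding osc_def r_def by (simp add: algebra_simps)
  qed
  have oscpow: "osc (t * m) \<le> r ^ t * osc 0" for t
  proof (induction t)
    case 0 then show ?case by simp
  next
    case (Suc t)
    have "osc (Suc t * m) = osc (t * m + m)" by (simp add: add.commute)
    also have "\<dots> \<le> r * osc (t * m)" by (rule contr)
    also have "\<dots> \<le> r * (r ^ t * osc 0)" by (rule mult_left_mono[OF Suc r(1)])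
    finally show ?case by simp
  qed
  have oscmono: "osc k \<le> osc k'" if "k' \<le> k" for k k'
    using decseq incseq that unfolding osc_def decseq_def incseq_def
    by (metis diff_mono)
  have osc0: "osc \<longlonglongrightarrow> 0"
  proof (rule LIMSEQ_I)
    fix \<epsilon> :: real assume e: "0 < \<epsilon>"
    have "(\<lambda>t. r ^ t * osc 0) \<longlonglongrightarrow> 0 * osc 0"
      by (intro tendsto_intros) (use r in simp)
    then have "eventually (\<lambda>t. r ^ t * osc 0 < \<epsilon>) sequentially"
      using e by (intro order_tendstoD(2)) auto
    then obtain T where T: "r ^ T * osc 0 < \<epsilon>"
      by (auto simp: eventually_sequentially)
    show "\<exists>no. \<forall>k\<ge>no. norm (osc k - 0) < \<epsilon>"
    proof (intro exI allI impI)
      fix k assume "T * m \<le> k"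
      then have "osc k \<le> osc (T * m)" by (rule oscmono)
      also have "\<dots> \<le> r ^ T * osc 0" by (rule oscpow)
      finally show "norm (osc k - 0) < \<epsilon>" using T oscnn[of k] by simp
    qed
  qed
  have lob: "lo 0 \<le> hi k" for k
  proof -
    have "lo 0 \<le> lo k" using incseq unfolding incseq_def by simp
    moreover have "lo k \<le> hi k" using bnd[of 0 k] n by simp
    ultimately show ?thesis by simp
  qed
  obtain L where L: "hi \<longlonglongrightarrow> L" using decseq_convergent[OF decseq, of "lo 0"] lob by blast
  have "(\<lambda>k. hi k - osc k) \<longlonglongrightarrow> L - 0" by (intro tendsto_intros L osc0)
  then have lo: "lo \<longlonglongrightarrow> L" unfolding osc_def by simp
  have "(\<lambda>k. y k i) \<longlonglongrightarrow> L" if "i < n" for i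
    by (rule tendsto_sandwich[OF _ _ lo L]) (use bnd[OF that] in auto)
  then show ?thesis unfolding y_def by blast
qed



lemma erg_main:
  assumes st: "stochastic n A" and n: "n \<ge> 1" and pr: "primitive n A"
  shows "(\<forall>j<n. 0 \<le> left_dom_eigvec n A j) \<and> (\<Sum>j<n. left_dom_eigvec n A j) = 1
     \<and> (\<forall>x. (\<lambda>k. ave n (traj n A x k)) \<longlonglongrightarrow> (\<Sum>j<n. left_dom_eigvec n A j * x j))"
proof -
  obtain m where m: "m \<ge> 1" and pos: "\<And>i j. i < n \<Longrightarrow> j < n \<Longrightarrow> 0 < mat_pow n A m i j"
    using prim_pos[OF st n pr] by blast
  have n0: "0 < n" using n by simp
  have ex: "\<exists>L. \<forall>i<n. (\<lambda>k. mat_pow n A k i j) \<longlonglongrightarrow> L" if j: "j < n" for j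
  proof -
    obtain L where L: "\<forall>i<n. (\<lambda>k. traj n A (\<lambda>l. if l = j then 1 else 0) k i) \<longlonglongrightarrow> L"
      using erg_conv[OF st n m pos] by blast
    have "traj n A (\<lambda>l. if l = j then 1 else 0) k i = mat_pow n A k i j" if "i < n" for i k
    proof -
      have "traj n A (\<lambda>l. if l = j then 1 else 0) k i
          = (\<Sum>l<n. mat_pow n A k i l * (if l = j then 1 else 0))" by (rule traj_mp[OF that])
      also have "\<dots> = (\<Sum>l<n. if l = j then mat_pow n A k i l else 0)"
        by (rule sum.cong) auto
      also have "\<dots> = mat_pow n A k i j" using j by simp
      finally show ?thesis .
    qed
    then show ?thesis using L by (intro exI[of _ L]) auto
  qed
  define \<pi> where "\<pi> j = (if j < n then (SOME L. \<forall>i<n. (\<lambda>k. mat_pow n A k i j) \<longlonglongrightarrow> L) else 0)" for j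
  have mpc: "(\<lambda>k. mat_pow n A k i j) \<longlonglongrightarrow> \<pi> j" if "i < n" "j < n" for i j
  proof -
    have "\<forall>i<n. (\<lambda>k. mat_pow n A k i j) \<longlonglongrightarrow> \<pi> j"
      unfolding \<pi>_def using that(2) by simp (rule someI_ex[OF ex[OF that(2)]])
    then show ?thesis using that(1) by blast
  qed
  have pinn: "0 \<le> \<pi> j" if "j < n" for j
    by (rule LIMSEQ_le_const[OF mpc[OF n0 that]]) (use mp_nonneg[OF st that] in auto)
  have "(\<lambda>k. \<Sum>j<n. mat_pow n A k 0 j) \<longlonglongrightarrow> (\<Sum>j<n. \<pi> j)"
    by (intro tendsto_sum mpc[OF n0]) auto
  then have "(\<lambda>k. 1::real) \<longlonglongrightarrow> (\<Sum>j<n. \<pi> j)" using mp_rowsum[OF st n0] by simp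
  then have pisum: "(\<Sum>j<n. \<pi> j) = 1" by (simp add: LIMSEQ_const_iff)
  have pistat: "(\<Sum>i<n. \<pi> i * A i j) = \<pi> j" if j: "j < n" for j
  proof -
    have "(\<lambda>k. mat_pow n A (Suc k) 0 j) \<longlonglongrightarrow> \<pi> j"
      using mpc[OF n0 j] by (rule LIMSEQ_Suc)
    moreover have "(\<lambda>k. mat_pow n A (Suc k) 0 j) \<longlonglongrightarrow> (\<Sum>i<n. \<pi> i * A i j)"
      unfolding mat_pow.simps mat_mult_def by (intro tendsto_sum tendsto_mult_right mpc[OF n0]) auto
    ultimately show ?thesis by (rule LIMSEQ_unique[rotated])
  qed
  have uniq: "\<rho> = \<pi>" if r: "(\<forall>i<n. 0 \<le> \<rho> i) \<and> (\<Sum>i<n. \<rho> i) = 1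
      \<and> (\<forall>j<n. (\<Sum>i<n. \<rho> i * A i j) = \<rho> j) \<and> (\<forall>i\<ge>n. \<rho> i = 0)" for \<rho>
  proof
    fix j
    show "\<rho> j = \<pi> j"
    proof (cases "j < n")
      case False then show ?thesis using r unfolding \<pi>_def by simp
    next
      case j: True
      have inv: "(\<Sum>i<n. \<rho> i * mat_pow n A k i j) = \<rho> j" if "j < n" for k j
        using that
      proof (induction k arbitrary: j)
        case 0
        have "(\<Sum>i<n. \<rho> i * mat_pow n A 0 i j) = (\<Sum>i<n. if i = j then \<rho> i else 0)"
          by (rule sum.cong) auto
        then show ?case using 0 by simp
      next
        case (Suc k)
        have "(\<Sum>i<n. \<rho> i * mat_pow n A (Suc k) i j) = (\<Sum>i<n. \<Sum>l<n. \<rho> i * mat_pow n A k i l * A l j)"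
          by (simp add: mat_mult_def sum_distrib_left mult.assoc)
        also have "\<dots> = (\<Sum>l<n. (\<Sum>i<n. \<rho> i * mat_pow n A k i l) * A l j)"
          by (subst sum.swap) (simp add: sum_distrib_right)
        also have "\<dots> = (\<Sum>l<n. \<rho> l * A l j)" using Suc.IH by simp
        also have "\<dots> = \<rho> j" using r Suc.prems by simp
        finally show ?case .
      qed
      have "(\<lambda>k. \<Sum>i<n. \<rho> i * mat_pow n A k i j) \<longlonglongrightarrow> (\<Sum>i<n. \<rho> i * \<pi> j)"
        by (intro tendsto_sum tendsto_mult_left mpc j) auto
      moreover have "(\<Sum>i<n. \<rho> i * \<pi> j) = \<pi> j" using r by (simp add: sum_distrib_right[symmetric])
      ultimately have "(\<lambda>k. \<rho> j) \<longlonglongrightarrow> \<pi> j" using inv[OF j] by simp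
      then show ?thesis by (simp add: LIMSEQ_const_iff)
    qed
  qed
  have "left_dom_eigvec n A = \<pi>"
    unfolding left_dom_eigvec_def
  proof (rule the_equality)
    show "(\<forall>i<n. 0 \<le> \<pi> i) \<and> (\<Sum>i<n. \<pi> i) = 1 \<and> (\<forall>j<n. (\<Sum>i<n. \<pi> i * A i j) = \<pi> j) \<and> (\<forall>i\<ge>n. \<pi> i = 0)"
      using pinn pisum pistat unfolding \<pi>_def[of i for i] by (auto simp: \<pi>_def)
  qed (rule uniq)
  moreover have "(\<lambda>k. ave n (traj n A x k)) \<longlonglongrightarrow> (\<Sum>j<n. \<pi> j * x j)" for x
  proof -
    have t: "(\<lambda>k. traj n A x k i) \<longlonglongrightarrow> (\<Sum>j<n. \<pi> j * x j)" if "i < n" for i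
      unfolding traj_mp[OF that] by (intro tendsto_sum tendsto_mult_right mpc that) auto
    have "(\<lambda>k. (\<Sum>i<n. traj n A x k i) / real n) \<longlonglongrightarrow> (\<Sum>i<n. (\<Sum>j<n. \<pi> j * x j)) / real n"
      by (intro tendsto_divide tendsto_sum t tendsto_const) (use n in auto)
    then show ?thesis unfolding ave_def using n by simp
  qed
  ultimately show ?thesis using pinn pisum by simp
qed



theorem theorem1:
  fixes M :: "'a measure" and \<xi> :: "nat \<Rightarrow> nat \<Rightarrow> 'a \<Rightarrow> real"
    and \<mu> \<sigma> :: real and P :: "nat \<Rightarrow> nat \<Rightarrow> nat \<Rightarrow> real"
  assumes "prob_space M"
    and "\<sigma> > 0"
    and "\<And>n. prob_space.indep_vars M (\<lambda>_. borel) (\<xi> n) {..<n}"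
    and "\<And>n i. i < n \<Longrightarrow> distributed M lborel (\<xi> n i) (normal_density 0 \<sigma>)"
    and "\<And>n. stochastic n (P n)"
  shows "(one_time_wise M \<mu> \<xi> P \<longleftrightarrow>
            (\<lambda>n. norm1 n (\<lambda>i j. P n i j / real n)) \<longlonglongrightarrow> 0)
       \<and> (finite_time_wise M \<mu> \<xi> P \<longleftrightarrow>
            (\<forall>k. (\<lambda>n. norm1 n (\<lambda>i j. mat_pow n (P n) k i j / real n)) \<longlonglongrightarrow> 0))
       \<and> ((\<forall>n\<ge>1. primitive n (P n)) \<longrightarrow>
            (wise M \<mu> \<xi> P \<longleftrightarrow>
              (\<lambda>n. norm_inf_vec n (left_dom_eigvec n (P n))) \<longlonglongrightarrow> 0))"
proof -
  note M = assms(1) and sig = assms(2) and ind = assms(3) and dist = assms(4) and st = assms(5)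
  have ft: "conv_in_prob M (\<lambda>n \<omega>. ave n (traj n (P n) (x0 \<mu> \<xi> n \<omega>) k)) \<mu>
     \<longleftrightarrow> (\<lambda>n. norm1 n (\<lambda>i j. mat_pow n (P n) k i j / real n)) \<longlonglongrightarrow> 0" for k
    by (rule ft_k[OF M sig ind dist st])
  have n1: "norm1 n (\<lambda>i j. P n i j / real n) = norm1 n (\<lambda>i j. mat_pow n (P n) 1 i j / real n)" for n
    unfolding norm1_def
  proof (rule arg_cong[where f=Max], rule image_cong[OF refl], rule sum.cong[OF refl])
    fix i j assume "i \<in> {..<n}"
    then have i: "i < n" by simp
    have "mat_pow n (P n) 1 i j = (\<Sum>l<n. if l = i then P n l j else 0)"
      unfolding One_nat_def mat_pow.simps mat_mult_def by (rule sum.cong) auto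
    also have "\<dots> = P n i j" using i by simp
    finally show "\<bar>P n i j / real n\<bar> = \<bar>mat_pow n (P n) 1 i j / real n\<bar>" by simp
  qed
  have part1: "one_time_wise M \<mu> \<xi> P \<longleftrightarrow> (\<lambda>n. norm1 n (\<lambda>i j. P n i j / real n)) \<longlonglongrightarrow> 0"
    unfolding one_time_wise_def n1 by (rule ft)
  have part2: "finite_time_wise M \<mu> \<xi> P \<longleftrightarrow>
            (\<forall>k. (\<lambda>n. norm1 n (\<lambda>i j. mat_pow n (P n) k i j / real n)) \<longlonglongrightarrow> 0)"
    unfolding finite_time_wise_def using ft by simp
  have part3: "wise M \<mu> \<xi> P \<longleftrightarrow> (\<lambda>n. norm_inf_vec n (left_dom_eigvec n (P n))) \<longlonglongrightarrow> 0"
    if prim: "\<forall>n\<ge>1. primitive n (P n)"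
  proof -
    define w where "w n j = left_dom_eigvec n (P n) j" for n j
    have E: "(\<forall>j<n. 0 \<le> w n j) \<and> (\<Sum>j<n. w n j) = 1
       \<and> (\<forall>x. (\<lambda>k. ave n (traj n (P n) x k)) \<longlonglongrightarrow> (\<Sum>j<n. w n j * x j))" if "1 \<le> n" for n
      unfolding w_def by (rule erg_main[OF st that]) (use prim that in auto)
    have wnn: "0 \<le> w n j" if "1 \<le> n" "j < n" for n j using E[OF that(1)] that(2) by blast
    have w1: "(\<Sum>j<n. w n j) = 1" if "1 \<le> n" for n using E[OF that] by blast
    have Y: "lim (\<lambda>k. ave n (traj n (P n) (x0 \<mu> \<xi> n \<omega>) k)) = \<mu> + (\<Sum>j<n. w n j * \<xi> n j \<omega>)"
      if "1 \<le> n" "\<omega> \<in> space M" for n \<omega>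
    proof -
      have "lim (\<lambda>k. ave n (traj n (P n) (x0 \<mu> \<xi> n \<omega>) k)) = (\<Sum>j<n. w n j * x0 \<mu> \<xi> n \<omega> j)"
        using E[OF that(1)] by (intro limI) blast
      also have "\<dots> = \<mu> * (\<Sum>j<n. w n j) + (\<Sum>j<n. w n j * \<xi> n j \<omega>)"
        unfolding x0_def by (simp add: distrib_left sum.distrib sum_distrib_left mult.commute)
      finally show ?thesis using w1[OF that(1)] by simp
    qed
    have "wise M \<mu> \<xi> P \<longleftrightarrow> (\<lambda>n. MAX j\<in>{..<n}. w n j) \<longlonglongrightarrow> 0"
      unfolding wise_def by (rule core_prob[OF M sig ind dist wnn w1 Y])
    also have "(\<lambda>n. MAX j\<in>{..<n}. w n j) = (\<lambda>n. norm_inf_vec n (left_dom_eigvec n (P n)))"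
    proof
      fix n
      show "(MAX j\<in>{..<n}. w n j) = norm_inf_vec n (left_dom_eigvec n (P n))"
        unfolding norm_inf_vec_def
      proof (rule arg_cong[where f=Max], rule image_cong[OF refl])
        fix j assume "j \<in> {..<n}"
        then have "1 \<le> n" "j < n" by auto
        then show "w n j = \<bar>left_dom_eigvec n (P n) j\<bar>" using wnn unfolding w_def by simp
      qed
    qed
    finally show ?thesis .
  qed
  show ?thesis using part1 part2 part3 by blast
qed


end
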